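(* For all $x,y\in\mathbb{C}$ and all integers $n\ge 0$, \[ \sum_{k=0}^n(-1)^k x^{n-k}\big(L_{k+1}(y)+(xy-2)F_k(y)\big)=(-1)^n y\,F_{n+1}(y) \] and \[ \sum_{k=0}^n(-1)^k x^{n-k}\big((y^2+4)F_{k+1}(y)+(xy-2)L_k(y)\big)=(-1)^n y\,L_{n+1}(y)+2y\,x^{n+1}. \]
   Context: The Fibonacci polynomials $F_n(y)$ and Lucas polynomials $L_n(y)$ are defined by $F_0(y)=0$, $F_1(y)=1$, $L_0(y)=2$, $L_1(y)=y$ and $W_n(y)=yW_{n-1}(y)+W_{n-2}(y)$ for $n\ge2$ (for $W=F$ and $W=L$). *)

theory Defs
  imports Complex_Main
begin

fun fibpoly :: "nat \<Rightarrow> complex \<Rightarrow> complex" where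
  "fibpoly 0 y = 0"
| "fibpoly (Suc 0) y = 1"
| "fibpoly (Suc (Suc n)) y = y * fibpoly (Suc n) y + fibpoly n y"

fun lucpoly :: "nat \<Rightarrow> complex \<Rightarrow> complex" where
  "lucpoly 0 y = 2"
| "lucpoly (Suc 0) y = y"
| "lucpoly (Suc (Suc n)) y = y * lucpoly (Suc n) y + lucpoly n y"

end

theory Submission
  imports Defs
begin

lemma aux: "lucpoly (Suc m) y = y * fibpoly (Suc m) y + 2 * fibpoly m y
   \<and> (y^2 + 4) * fibpoly (Suc m) y = y * lucpoly (Suc m) y + 2 * lucpoly m y"
proof (induction m rule: nat_less_induct)
  case (1 m)
  show ?case
  proof (cases m)
    case 0 then show ?thesis by (simp add: power2_eq_square algebra_simps)
  next
    case (Suc k)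
    show ?thesis
    proof (cases k)
      case 0 then show ?thesis using Suc by (simp add: power2_eq_square algebra_simps)
    next
      case (Suc j)
      have a: "lucpoly (Suc k) y = y * fibpoly (Suc k) y + 2 * fibpoly k y
         \<and> (y^2 + 4) * fibpoly (Suc k) y = y * lucpoly (Suc k) y + 2 * lucpoly k y"
        using 1 \<open>m = Suc k\<close> by auto
      have b: "lucpoly (Suc j) y = y * fibpoly (Suc j) y + 2 * fibpoly j y
         \<and> (y^2 + 4) * fibpoly (Suc j) y = y * lucpoly (Suc j) y + 2 * lucpoly j y"
        using 1 \<open>m = Suc k\<close> Suc by auto
      have r1: "lucpoly (Suc m) y = y * lucpoly m y + lucpoly k y"
        and r2: "fibpoly (Suc m) y = y * fibpoly m y + fibpoly k y"
        and r3: "lucpoly m y = y * lucpoly k y + lucpoly j y"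
        and r4: "fibpoly m y = y * fibpoly k y + fibpoly j y"
        using \<open>m = Suc k\<close> Suc by simp_all
      have a1: "lucpoly m y = y * fibpoly m y + 2 * fibpoly k y"
        and a2: "(y^2 + 4) * fibpoly m y = y * lucpoly m y + 2 * lucpoly k y"
        using a \<open>m = Suc k\<close> by auto
      have b1: "lucpoly k y = y * fibpoly k y + 2 * fibpoly j y"
        and b2: "(y^2 + 4) * fibpoly k y = y * lucpoly k y + 2 * lucpoly j y"
        using b Suc by auto
      have g1: "lucpoly (Suc m) y = y * fibpoly (Suc m) y + 2 * fibpoly m y"
        unfolding r1 r2 a1 b1 r4 by (simp add: algebra_simps)
      have g2: "(y^2 + 4) * fibpoly (Suc m) y = y * lucpoly (Suc m) y + 2 * lucpoly m y"
      proof -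
        have "(y^2 + 4) * fibpoly (Suc m) y = y * ((y^2 + 4) * fibpoly m y) + (y^2 + 4) * fibpoly k y"
          unfolding r2 by (simp add: algebra_simps)
        also have "\<dots> = y * (y * lucpoly m y + 2 * lucpoly k y) + (y * lucpoly k y + 2 * lucpoly j y)"
          unfolding a2 b2 ..
        also have "\<dots> = y * lucpoly (Suc m) y + 2 * lucpoly m y"
          unfolding r1 r3 by (simp add: algebra_simps)
        finally show ?thesis .
      qed
      show ?thesis using g1 g2 by simp
    qed
  qed
qed

lemma sum_step:
  fixes x :: complex
  shows "(\<Sum>k=0..Suc n. (-1)^k * x^(Suc n-k) * g k)
       = x * (\<Sum>k=0..n. (-1)^k * x^(n-k) * g k) + (-1)^(Suc n) * g (Suc n)"
proof -
  have "(\<Sum>k=0..n. (-1)^k * x^(Suc n-k) * g k) = x * (\<Sum>k=0..n. (-1)^k * x^(n-k) * g k)"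
    unfolding sum_distrib_left
    by (rule sum.cong) (auto simp: Suc_diff_le)
  then show ?thesis by simp
qed

theorem proposition3:
  fixes x y :: complex and n :: nat
  shows "((\<Sum>k=0..n. (-1)^k * x^(n-k) * (lucpoly (k+1) y + (x*y - 2) * fibpoly k y))
           = (-1)^n * y * fibpoly (n+1) y)
      \<and> ((\<Sum>k=0..n. (-1)^k * x^(n-k) * ((y^2 + 4) * fibpoly (k+1) y + (x*y - 2) * lucpoly k y))
           = (-1)^n * y * lucpoly (n+1) y + 2 * y * x^(n+1))"
proof (induction n)
  case 0
  then show ?case by (simp add: power2_eq_square algebra_simps)
next
  case (Suc n)
  have A: "lucpoly (Suc (Suc n)) y = y * fibpoly (Suc (Suc n)) y + 2 * fibpoly (Suc n) y"
   and B: "(y^2 + 4) * fibpoly (Suc (Suc n)) y = y * lucpoly (Suc (Suc n)) y + 2 * lucpoly (Suc n) y"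
    using aux[of "Suc n" y] by auto
  let ?F1 = "fibpoly (Suc n) y" and ?F2 = "fibpoly (Suc (Suc n)) y"
  let ?L1 = "lucpoly (Suc n) y" and ?L2 = "lucpoly (Suc (Suc n)) y"
  have e1: "x * ((-1)^n * y * ?F1) + (-1)^(Suc n) * (?L2 + (x*y - 2) * ?F1) = (-1)^(Suc n) * y * ?F2"
  proof -
    have "x * ((-1)^n * y * ?F1) + (-1)^(Suc n) * (?L2 + (x*y - 2) * ?F1)
        = (-1)^(Suc n) * (?L2 - 2 * ?F1)" by (simp add: algebra_simps)
    also have "\<dots> = (-1)^(Suc n) * y * ?F2" unfolding A by simp
    finally show ?thesis .
  qed
  have e2: "x * ((-1)^n * y * ?L1 + 2 * y * x^(n+1)) + (-1)^(Suc n) * ((y^2+4) * ?F2 + (x*y - 2) * ?L1)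
     = (-1)^(Suc n) * y * ?L2 + 2 * y * x^(Suc n + 1)"
  proof -
    have "x * ((-1)^n * y * ?L1 + 2 * y * x^(n+1)) + (-1)^(Suc n) * ((y^2+4) * ?F2 + (x*y - 2) * ?L1)
        = (-1)^(Suc n) * ((y^2+4) * ?F2 - 2 * ?L1) + 2 * y * x^(Suc n + 1)" by (simp add: algebra_simps)
    also have "\<dots> = (-1)^(Suc n) * y * ?L2 + 2 * y * x^(Suc n + 1)" unfolding B by simp
    finally show ?thesis .
  qed
  show ?case
    unfolding sum_step[where g="\<lambda>k. lucpoly (k+1) y + (x*y - 2) * fibpoly k y"]
      sum_step[where g="\<lambda>k. (y^2 + 4) * fibpoly (k+1) y + (x*y - 2) * lucpoly k y"]
    using Suc.IH e1 e2 by simp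
qed

end
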